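(* Let $X$ be a finite set, $t_1<\dots<t_M$ real numbers and $(\mathcal{P}^{t_m})_{m\le M}$ partitions of $X$. Then the persistent hierarchy satisfies $h(t)=1$ for all $t\ge t_1$ if and only if the sequence is strictly hierarchical, i.e. $\mathcal{P}^{t_1}\le\mathcal{P}^{t_2}\le\dots\le\mathcal{P}^{t_M}$.
   Context: A partition of $X$ is a collection of non-empty pairwise disjoint subsets (clusters) whose union is $X$; $\#\mathcal{P}$ is its number of clusters. $\mathcal{P}\le\mathcal{Q}$ means every cluster of $\mathcal{P}$ is contained in a cluster of $\mathcal{Q}$. For a finite non-empty set $C$, $\Delta C$ is the set of all non-empty subsets of $C$. The Multiscale Clustering Filtration is $K^{t_m}:=\bigcup_{l\le m}\bigcup_{C\in\mathcal{P}^{t_l}}\Delta C$. For $t\ge t_1$, let $m$ be the largest index with $t_m\le t$ and set $\mathcal{P}^t:=\mathcal{P}^{t_m}$, $K^t:=K^{t_m}$. Let $\beta_0^t$ be the number of connected components of $K^t$ (rank of $H_0(K^t)$). The persistent hierarchy is $h(t):=\beta_0^t/\#\mathcal{P}^t$ for $t\ge t_1$. *)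

theory Defs
  imports Complex_Main
begin

definition is_partition :: "'a set \<Rightarrow> 'a set set \<Rightarrow> bool" where
  "is_partition X P \<longleftrightarrow> (\<forall>C\<in>P. C \<noteq> {}) \<and>
     (\<forall>C\<in>P. \<forall>D\<in>P. C \<noteq> D \<longrightarrow> C \<inter> D = {}) \<and> \<Union>P = X"

definition refines :: "'a set set \<Rightarrow> 'a set set \<Rightarrow> bool" where
  "refines P Q \<longleftrightarrow> (\<forall>C\<in>P. \<exists>D\<in>Q. C \<subseteq> D)"

definition Delta :: "'a set \<Rightarrow> 'a set set" where
  "Delta C = {S. S \<subseteq> C \<and> S \<noteq> {}}"

text \<open>Multiscale Clustering Filtration at index m (indices 1..M).\<close>
definition mcf :: "(nat \<Rightarrow> 'a set set) \<Rightarrow> nat \<Rightarrow> 'a set set" where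
  "mcf P m = (\<Union>l\<in>{1..m}. \<Union>C\<in>P l. Delta C)"

text \<open>Connected components of a simplicial complex K (given as a set of simplices):
  equivalence classes of vertices under the transitive closure of
  "lying in a common simplex".\<close>
definition simplex_adj :: "'a set set \<Rightarrow> ('a \<times> 'a) set" where
  "simplex_adj K = {(x, y). \<exists>\<sigma>\<in>K. x \<in> \<sigma> \<and> y \<in> \<sigma>}"

definition betti0 :: "'a set set \<Rightarrow> nat" where
  "betti0 K = card ((\<Union>K) // trancl (simplex_adj K))"

text \<open>For t \<ge> t_1: the largest index m \<le> M with t_m \<le> t.\<close>
definition scale_index :: "(nat \<Rightarrow> real) \<Rightarrow> nat \<Rightarrow> real \<Rightarrow> nat" where
  "scale_index tt M t = (GREATEST m. m \<in> {1..M} \<and> tt m \<le> t)"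

definition persistent_hierarchy ::
  "(nat \<Rightarrow> 'a set set) \<Rightarrow> (nat \<Rightarrow> real) \<Rightarrow> nat \<Rightarrow> real \<Rightarrow> real" where
  "persistent_hierarchy P tt M t =
     (let m = scale_index tt M t in real (betti0 (mcf P m)) / real (card (P m)))"

end

theory Submission
  imports Defs
begin

lemma part_ne: "is_partition Y Q \<Longrightarrow> C \<in> Q \<Longrightarrow> C \<noteq> {}"
  unfolding is_partition_def by simp

lemma part_sub: "is_partition Y Q \<Longrightarrow> C \<in> Q \<Longrightarrow> C \<subseteq> Y"
  unfolding is_partition_def by auto

lemma part_cover: "is_partition Y Q \<Longrightarrow> x \<in> Y \<Longrightarrow> \<exists>C\<in>Q. x \<in> C"
  unfolding is_partition_def by auto

lemma part_disj: "is_partition Y Q \<Longrightarrow> C \<in> Q \<Longrightarrow> D \<in> Q \<Longrightarrow> x \<in> C \<Longrightarrow> x \<in> D \<Longrightarrow> C = D"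
  unfolding is_partition_def by auto

context
  fixes X :: "'a set" and M :: nat and P :: "nat \<Rightarrow> 'a set set"
  assumes fin: "finite X" and part: "\<And>m. 1 \<le> m \<Longrightarrow> m \<le> M \<Longrightarrow> is_partition X (P m)"
begin

lemma union_mcf:
  assumes "1 \<le> n" "n \<le> M"
  shows "\<Union>(mcf P n) = X"
proof
  show "\<Union>(mcf P n) \<subseteq> X"
  proof
    fix x assume "x \<in> \<Union>(mcf P n)"
    then obtain l C S where "l \<in> {1..n}" "C \<in> P l" "S \<in> Delta C" "x \<in> S"
      unfolding mcf_def by blast
    moreover have "is_partition X (P l)" using part \<open>l \<in> {1..n}\<close> assms by auto
    ultimately show "x \<in> X" unfolding is_partition_def Delta_def by blast
  qed
  show "X \<subseteq> \<Union>(mcf P n)"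
  proof
    fix x assume "x \<in> X"
    then obtain C where C: "C \<in> P n" "x \<in> C" using part[OF assms] unfolding is_partition_def by blast
    then have "C \<in> Delta C" unfolding Delta_def by auto
    then have "C \<in> mcf P n" unfolding mcf_def using C assms by auto
    then show "x \<in> \<Union>(mcf P n)" using C by blast
  qed
qed

lemma clusters_adj:
  assumes "1 \<le> l" "l \<le> n" "n \<le> M" "C \<in> P l" "x \<in> C" "y \<in> C"
  shows "(x, y) \<in> simplex_adj (mcf P n)"
proof -
  have "C \<in> Delta C" using assms unfolding Delta_def by auto
  then have "C \<in> mcf P n" unfolding mcf_def using assms by auto
  then show ?thesis using assms unfolding simplex_adj_def by blast
qed

lemma equiv_R:
  assumes "1 \<le> n" "n \<le> M"
  shows "equiv X ((simplex_adj (mcf P n))\<^sup>+)"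
proof (rule equivI)
  have sub: "simplex_adj (mcf P n) \<subseteq> X \<times> X"
    using union_mcf[OF assms] unfolding simplex_adj_def by blast
  show "(simplex_adj (mcf P n))\<^sup>+ \<subseteq> X \<times> X" by (rule trancl_subset_Sigma[OF sub])
  show "refl_on X ((simplex_adj (mcf P n))\<^sup>+)"
    unfolding refl_on_def
  proof
    fix x assume "x \<in> X"
    then obtain C where C: "C \<in> P n" "x \<in> C" using part[OF assms] unfolding is_partition_def by blast
    show "(x, x) \<in> (simplex_adj (mcf P n))\<^sup>+" using clusters_adj[OF assms(1) order_refl assms(2) C C(2)] by blast
  qed
  have "sym (simplex_adj (mcf P n))" unfolding sym_def simplex_adj_def by blast
  then show "sym ((simplex_adj (mcf P n))\<^sup>+)" by (rule sym_trancl)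
  show "trans ((simplex_adj (mcf P n))\<^sup>+)" by (rule trans_trancl)
qed

lemma class_eq:
  assumes "1 \<le> n" "n \<le> M" "C \<in> P n" "x \<in> C"
  shows "(simplex_adj (mcf P n))\<^sup>+ `` C = (simplex_adj (mcf P n))\<^sup>+ `` {x}"
proof -
  let ?R = "(simplex_adj (mcf P n))\<^sup>+"
  have e: "equiv X ?R" by (rule equiv_R[OF assms(1,2)])
  have "\<And>c. c \<in> C \<Longrightarrow> ?R `` {c} = ?R `` {x}"
    using equiv_class_eq[OF e] clusters_adj[OF assms(1) order_refl assms(2,3)] assms(4) by blast
  note eqs = this
  show ?thesis
  proof
    show "?R `` C \<subseteq> ?R `` {x}"
    proof
      fix z assume "z \<in> ?R `` C"
      then obtain c where c: "c \<in> C" "(c, z) \<in> ?R" by blast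
      then have "z \<in> ?R `` {c}" by blast
      then show "z \<in> ?R `` {x}" using eqs[OF c(1)] by simp
    qed
    show "?R `` {x} \<subseteq> ?R `` C" using assms(4) by blast
  qed
qed

lemma quot_eq:
  assumes "1 \<le> n" "n \<le> M"
  shows "X // (simplex_adj (mcf P n))\<^sup>+ = (\<lambda>C. (simplex_adj (mcf P n))\<^sup>+ `` C) ` P n"
proof -
  let ?R = "(simplex_adj (mcf P n))\<^sup>+"
  have p: "is_partition X (P n)" using part[OF assms] .
  show ?thesis
  proof
    show "X // ?R \<subseteq> (\<lambda>C. ?R `` C) ` P n"
    proof
      fix Q assume "Q \<in> X // ?R"
      then obtain x where x: "x \<in> X" "Q = ?R `` {x}" unfolding quotient_def by blast
      then obtain C where C: "C \<in> P n" "x \<in> C" using part_cover[OF p] by blast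
      have "Q = ?R `` C" using class_eq[OF assms C] x(2) by simp
      then show "Q \<in> (\<lambda>C. ?R `` C) ` P n" using C(1) by blast
    qed
    show "(\<lambda>C. ?R `` C) ` P n \<subseteq> X // ?R"
    proof
      fix Q assume "Q \<in> (\<lambda>C. ?R `` C) ` P n"
      then obtain C where C: "C \<in> P n" "Q = ?R `` C" by blast
      have "C \<noteq> {}" using part_ne[OF p C(1)] .
      then obtain x where x: "x \<in> C" by blast
      have "x \<in> X" using part_sub[OF p C(1)] x by blast
      then have "?R `` {x} \<in> X // ?R" by (rule quotientI)
      then show "Q \<in> X // ?R" using class_eq[OF assms C(1) x] C(2) by simp
    qed
  qed
qed

lemma finP:
  assumes "1 \<le> n" "n \<le> M"
  shows "finite (P n)"
proof -
  have "P n \<subseteq> Pow X" using part[OF assms] unfolding is_partition_def by blast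
  moreover have "finite (Pow X)" using fin by simp
  ultimately show ?thesis by (rule finite_subset)
qed

lemma betti_iff:
  assumes "1 \<le> n" "n \<le> M"
  shows "betti0 (mcf P n) = card (P n) \<longleftrightarrow> inj_on (\<lambda>C. (simplex_adj (mcf P n))\<^sup>+ `` C) (P n)"
proof -
  have "betti0 (mcf P n) = card ((\<lambda>C. (simplex_adj (mcf P n))\<^sup>+ `` C) ` P n)"
    unfolding betti0_def using union_mcf[OF assms] quot_eq[OF assms] by simp
  then show ?thesis using finP[OF assms] eq_card_imp_inj_on card_image by metis
qed

end

lemma refines_trans:
  assumes ab: "refines A B" and bc: "refines B C"
  shows "refines A C"
  unfolding refines_def
proof
  fix S assume "S \<in> A"
  then obtain T where T: "T \<in> B" "S \<subseteq> T" using ab unfolding refines_def by blast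
  then obtain U where U: "U \<in> C" "T \<subseteq> U" using bc unfolding refines_def by blast
  show "\<exists>U\<in>C. S \<subseteq> U" using T U by blast
qed

lemma refines_refl: "refines A A"
  unfolding refines_def by blast

theorem corollary1:
  fixes X :: "'a set" and M :: nat and tt :: "nat \<Rightarrow> real"
    and P :: "nat \<Rightarrow> 'a set set"
  assumes "finite X" and "X \<noteq> {}" and "M \<ge> 1"
    and "\<And>i j. 1 \<le> i \<Longrightarrow> i < j \<Longrightarrow> j \<le> M \<Longrightarrow> tt i < tt j"
    and "\<And>m. 1 \<le> m \<Longrightarrow> m \<le> M \<Longrightarrow> is_partition X (P m)"
  shows "(\<forall>t. t \<ge> tt 1 \<longrightarrow> persistent_hierarchy P tt M t = 1) \<longleftrightarrow>
         (\<forall>m. 1 \<le> m \<longrightarrow> m < M \<longrightarrow> refines (P m) (P (Suc m)))"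
proof -
  note fin = assms(1) and part = assms(5)
  have sidx: "scale_index tt M (tt k) = k" if "1 \<le> k" "k \<le> M" for k
    unfolding scale_index_def
  proof (rule Greatest_equality)
    show "k \<in> {1..M} \<and> tt k \<le> tt k" using that by auto
    fix y assume "y \<in> {1..M} \<and> tt y \<le> tt k"
    then show "y \<le> k" using assms(4)[of k y] that by (cases "k < y") auto
  qed
  have sin: "scale_index tt M t \<in> {1..M}" if "t \<ge> tt 1" for t
    unfolding scale_index_def
  proof -
    have "(GREATEST m. m \<in> {1..M} \<and> tt m \<le> t) \<in> {1..M} \<and> tt (GREATEST m. m \<in> {1..M} \<and> tt m \<le> t) \<le> t"
      by (rule GreatestI_nat[where k=1 and b=M]) (use that assms(3) in auto)
    then show "(GREATEST m. m \<in> {1..M} \<and> tt m \<le> t) \<in> {1..M}" by blast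
  qed
  have cpos: "card (P n) > 0" if "1 \<le> n" "n \<le> M" for n
  proof -
    have "P n \<noteq> {}" using part[OF that] assms(2) unfolding is_partition_def by auto
    then show ?thesis using finP[of X M P, OF fin part that] by auto
  qed
  have hiff: "persistent_hierarchy P tt M t = 1 \<longleftrightarrow>
      betti0 (mcf P (scale_index tt M t)) = card (P (scale_index tt M t))" if "t \<ge> tt 1" for t
    using cpos[of "scale_index tt M t"] sin[OF that]
    unfolding persistent_hierarchy_def Let_def by auto
  show ?thesis
  proof
    assume H: "\<forall>t. t \<ge> tt 1 \<longrightarrow> persistent_hierarchy P tt M t = 1"
    show "\<forall>m. 1 \<le> m \<longrightarrow> m < M \<longrightarrow> refines (P m) (P (Suc m))"
    proof (intro allI impI)
      fix m assume m: "1 \<le> m" "m < M"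
      define n where "n = Suc m"
      have n: "1 \<le> n" "n \<le> M" using m n_def by auto
      have mn: "m \<le> n" using n_def by simp
      let ?R = "(simplex_adj (mcf P n))\<^sup>+"
      have "tt 1 \<le> tt n" using assms(4)[of 1 n] n m n_def by auto
      then have "betti0 (mcf P n) = card (P n)" using H hiff[of "tt n"] sidx[OF n] by auto
      then have inj: "inj_on (\<lambda>C. ?R `` C) (P n)" using betti_iff[of X M P, OF fin part n] by blast
      have e: "equiv X ?R" by (rule equiv_R[of X M P, OF fin part n])
      have pm: "is_partition X (P m)" using part m by auto
      have pn: "is_partition X (P n)" using part n by auto
      show "refines (P m) (P (Suc m))"
        unfolding refines_def n_def[symmetric]
      proof
        fix C assume C: "C \<in> P m"
        show "\<exists>D\<in>P n. C \<subseteq> D"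
        proof (rule ccontr)
          assume nc: "\<not> (\<exists>D\<in>P n. C \<subseteq> D)"
          have "C \<noteq> {}" using part_ne[OF pm C] .
          then obtain x where x: "x \<in> C" by blast
          then have "x \<in> X" using part_sub[OF pm C] by blast
          then obtain D where D: "D \<in> P n" "x \<in> D" using part_cover[OF pn] by blast
          then obtain y where y: "y \<in> C" "y \<notin> D" using nc by blast
          then have "y \<in> X" using part_sub[OF pm C] by blast
          then obtain D' where D': "D' \<in> P n" "y \<in> D'" using part_cover[OF pn] by blast
          have "D \<noteq> D'" using y D' by auto
          have "(x, y) \<in> simplex_adj (mcf P n)"
            using clusters_adj[of X M P, OF fin part m(1) mn n(2) C x y(1)] .
          then have "?R `` {x} = ?R `` {y}" using equiv_class_eq[OF e] by blast
          then have "?R `` D = ?R `` D'"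
            using class_eq[of X M P, OF fin part n D] class_eq[of X M P, OF fin part n D'] by simp
          then show False using inj D(1) D'(1) \<open>D \<noteq> D'\<close> unfolding inj_on_def by blast
        qed
      qed
    qed
  next
    assume ch: "\<forall>m. 1 \<le> m \<longrightarrow> m < M \<longrightarrow> refines (P m) (P (Suc m))"
    have refl: "refines (P l) (P (l + k))" if "1 \<le> l" "l + k \<le> M" for l k
      using that
    proof (induction k)
      case 0 then show ?case by (simp add: refines_refl)
    next
      case (Suc k)
      then have "refines (P l) (P (l + k))" by simp
      moreover have "refines (P (l + k)) (P (Suc (l + k)))" using ch Suc.prems by auto
      ultimately show ?case using refines_trans by simp
    qed
    have refl2: "refines (P l) (P n)" if "1 \<le> l" "l \<le> n" "n \<le> M" for l n
      using refl[of l "n - l"] that by simp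
    show "\<forall>t. t \<ge> tt 1 \<longrightarrow> persistent_hierarchy P tt M t = 1"
    proof (intro allI impI)
      fix t assume t: "t \<ge> tt 1"
      define n where "n = scale_index tt M t"
      have n: "1 \<le> n" "n \<le> M" using sin[OF t] n_def by auto
      let ?A = "simplex_adj (mcf P n)"
      let ?R = "?A\<^sup>+"
      let ?E = "{(x, y). \<exists>D\<in>P n. x \<in> D \<and> y \<in> D}"
      have pn: "is_partition X (P n)" using part n by auto
      have AE: "?A \<subseteq> ?E"
      proof
        fix p assume "p \<in> ?A"
        then obtain x y \<sigma> where p: "p = (x, y)" "\<sigma> \<in> mcf P n" "x \<in> \<sigma>" "y \<in> \<sigma>"
          unfolding simplex_adj_def by blast
        then obtain l C where "l \<in> {1..n}" "C \<in> P l" "\<sigma> \<subseteq> C"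
          unfolding mcf_def Delta_def by blast
        moreover have "refines (P l) (P n)" using refl2 n \<open>l \<in> {1..n}\<close> by auto
        ultimately obtain D where "D \<in> P n" "C \<subseteq> D" unfolding refines_def by blast
        then show "p \<in> ?E" using p \<open>\<sigma> \<subseteq> C\<close> by blast
      qed
      have RE: "?R \<subseteq> ?E"
      proof
        fix p assume "p \<in> ?R"
        then obtain a b where ab: "p = (a, b)" "(a, b) \<in> ?R" by (cases p) auto
        from ab(2) have "(a, b) \<in> ?E"
        proof (induction rule: trancl_induct)
          case (base y) then show ?case using AE by blast
        next
          case (step y z)
          then obtain D where D: "D \<in> P n" "a \<in> D" "y \<in> D" by blast
          obtain D' where D': "D' \<in> P n" "y \<in> D'" "z \<in> D'" using step AE by blast
          have "D = D'" using part_disj[OF pn D(1) D'(1) D(3) D'(2)] .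
          then show ?case using D D' by blast
        qed
        then show "p \<in> ?E" using ab by simp
      qed
      have e: "equiv X ?R" by (rule equiv_R[of X M P, OF fin part n])
      have "inj_on (\<lambda>C. ?R `` C) (P n)"
      proof (rule inj_onI)
        fix D D' assume D: "D \<in> P n" "D' \<in> P n" "?R `` D = ?R `` D'"
        have "D \<noteq> {}" using part_ne[OF pn D(1)] .
        then obtain x where x: "x \<in> D" by blast
        then have "x \<in> X" using part_sub[OF pn D(1)] by blast
        then have "(x, x) \<in> ?R" using e unfolding equiv_def refl_on_def by blast
        then have "x \<in> ?R `` D'" using D x by blast
        then obtain y where y: "y \<in> D'" "(y, x) \<in> ?R" by blast
        then obtain D'' where D'': "D'' \<in> P n" "y \<in> D''" "x \<in> D''" using RE by blast
        have "D'' = D'" using part_disj[OF pn D''(1) D(2) D''(2) y(1)] .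
        moreover have "D'' = D" using part_disj[OF pn D''(1) D(1) D''(3) x] .
        ultimately show "D = D'" by simp
      qed
      then have "betti0 (mcf P n) = card (P n)" using betti_iff[of X M P, OF fin part n] by blast
      then show "persistent_hierarchy P tt M t = 1" using hiff[OF t] n_def by simp
    qed
  qed
qed

end
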